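(* Let $X$ be a topological space, $Y$ an Alexandroff space and $f:X\to Y$ a continuous surjection. Then for any join-preserving $\nabla_Y:\mathcal{O}(Y)\to\mathcal{O}(Y)$ and any valuation $V$ of the variables in $\mathcal{O}(Y)$, there exist a join-preserving $\nabla_X:\mathcal{O}(X)\to\mathcal{O}(X)$ and a valuation $U$ of the variables in $\mathcal{O}(X)$ such that for every sequent $\Gamma\Rightarrow A$, $(\mathcal{O}(X),\nabla_X,U)\vDash\Gamma\Rightarrow A$ iff $(\mathcal{O}(Y),\nabla_Y,V)\vDash\Gamma\Rightarrow A$. Moreover, for each class $\mathcal{C}\in\{i\mathbf{ST}(F),i\mathbf{ST}(wF)\}$, if $(\mathcal{O}(Y),\nabla_Y)\in\mathcal{C}$ then $(\mathcal{O}(X),\nabla_X)\in\mathcal{C}$. Consequently, for such $\mathcal{C}$, if $X\vDash_{\mathcal{C}}\Gamma\Rightarrow A$ then $Y\vDash_{\mathcal{C}}\Gamma\Rightarrow A$.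
   Context: $\mathcal{O}(Z)$ is the locale of opens of a space $Z$; a space is Alexandroff if arbitrary intersections of opens are open. Formulas of $\mathcal{L}_\nabla$ are built from variables and constants $1,\top,\bot$ by $\wedge,\vee,\otimes,\to$ and unary $\nabla$; sequents are $\Gamma\Rightarrow A$ with $\Gamma$ a finite sequence. For a join-preserving $\nabla$ on $\mathcal{O}(Z)$ (a spacetime $(\mathcal{O}(Z),\nabla)$), the implication is $W_1\to W_2=\Box(W_1\Rightarrow W_2)$ with $\Box$ the right adjoint of $\nabla$ and $\Rightarrow$ the Heyting implication of $\mathcal{O}(Z)$ (equivalently $W_1\cap\nabla W_2\subseteq W_3$ iff $W_2\subseteq W_1\to W_3$). A valuation of variables extends to all formulas by $1,\top\mapsto Z$, $\bot\mapsto\emptyset$, $\wedge,\otimes\mapsto\cap$, $\vee\mapsto\cup$, $\nabla\mapsto\nabla$, $\to\mapsto\to$; $(\mathcal{O}(Z),\nabla,V)\vDash\gamma_1,\dots,\gamma_n\Rightarrow A$ iff $V(\gamma_1)\cap\dots\cap V(\gamma_n)\subseteq V(A)$ (empty intersection $=Z$). $i\mathbf{ST}(F)$ is the class of such spacetimes with $W\subseteq\nabla W$ for all $W$; $i\mathbf{ST}(wF)$ those with $\nabla W=\emptyset\Rightarrow W=\emptyset$. $Z\vDash_{\mathcal{C}}\Gamma\Rightarrow A$ means $(\mathcal{O}(Z),\nabla,V)\vDash\Gamma\Rightarrow A$ for all $\nabla$ with $(\mathcal{O}(Z),\nabla)\in\mathcal{C}$ and all valuations $V$. *)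

theory Defs
  imports "HOL-Analysis.Analysis"
begin

datatype fm =
    FVar nat
  | FOne
  | FTop
  | FBot
  | FAnd fm fm
  | FOr fm fm
  | FTens fm fm
  | FImp fm fm
  | FNabla fm

type_synonym sequent = "fm list \<times> fm"

definition alexandroff :: "'a topology \<Rightarrow> bool" where
  "alexandroff Z \<longleftrightarrow>
     (\<forall>\<F>. (\<forall>W\<in>\<F>. openin Z W) \<longrightarrow> openin Z (topspace Z \<inter> \<Inter>\<F>))"

definition join_preserving :: "'a topology \<Rightarrow> ('a set \<Rightarrow> 'a set) \<Rightarrow> bool" where
  "join_preserving Z nab \<longleftrightarrow>
     (\<forall>W. openin Z W \<longrightarrow> openin Z (nab W)) \<and>
     (\<forall>\<F>. (\<forall>W\<in>\<F>. openin Z W) \<longrightarrow> nab (\<Union>\<F>) = \<Union>(nab ` \<F>))"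

definition box_op :: "'a topology \<Rightarrow> ('a set \<Rightarrow> 'a set) \<Rightarrow> 'a set \<Rightarrow> 'a set" where
  "box_op Z nab U = \<Union>{W. openin Z W \<and> nab W \<subseteq> U}"

definition heyting_imp :: "'a topology \<Rightarrow> 'a set \<Rightarrow> 'a set \<Rightarrow> 'a set" where
  "heyting_imp Z W1 W2 = \<Union>{W. openin Z W \<and> W \<inter> W1 \<subseteq> W2}"

definition st_imp :: "'a topology \<Rightarrow> ('a set \<Rightarrow> 'a set) \<Rightarrow> 'a set \<Rightarrow> 'a set \<Rightarrow> 'a set" where
  "st_imp Z nab W1 W2 = box_op Z nab (heyting_imp Z W1 W2)"

definition valuation :: "'a topology \<Rightarrow> (nat \<Rightarrow> 'a set) \<Rightarrow> bool" where
  "valuation Z V \<longleftrightarrow> (\<forall>p. openin Z (V p))"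

fun eval :: "'a topology \<Rightarrow> ('a set \<Rightarrow> 'a set) \<Rightarrow> (nat \<Rightarrow> 'a set) \<Rightarrow> fm \<Rightarrow> 'a set" where
  "eval Z nab V (FVar p) = V p"
| "eval Z nab V FOne = topspace Z"
| "eval Z nab V FTop = topspace Z"
| "eval Z nab V FBot = {}"
| "eval Z nab V (FAnd A B) = eval Z nab V A \<inter> eval Z nab V B"
| "eval Z nab V (FOr A B) = eval Z nab V A \<union> eval Z nab V B"
| "eval Z nab V (FTens A B) = eval Z nab V A \<inter> eval Z nab V B"
| "eval Z nab V (FImp A B) = st_imp Z nab (eval Z nab V A) (eval Z nab V B)"
| "eval Z nab V (FNabla A) = nab (eval Z nab V A)"

definition models :: "'a topology \<Rightarrow> ('a set \<Rightarrow> 'a set) \<Rightarrow> (nat \<Rightarrow> 'a set) \<Rightarrow> sequent \<Rightarrow> bool" where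
  "models Z nab V s \<longleftrightarrow>
     foldr (\<lambda>g acc. eval Z nab V g \<inter> acc) (fst s) (topspace Z) \<subseteq> eval Z nab V (snd s)"

definition in_iST_F :: "'a topology \<Rightarrow> ('a set \<Rightarrow> 'a set) \<Rightarrow> bool" where
  "in_iST_F Z nab \<longleftrightarrow> join_preserving Z nab \<and> (\<forall>W. openin Z W \<longrightarrow> W \<subseteq> nab W)"

definition in_iST_wF :: "'a topology \<Rightarrow> ('a set \<Rightarrow> 'a set) \<Rightarrow> bool" where
  "in_iST_wF Z nab \<longleftrightarrow> join_preserving Z nab \<and> (\<forall>W. openin Z W \<longrightarrow> nab W = {} \<longrightarrow> W = {})"

definition valid_in_class ::
  "('a topology \<Rightarrow> ('a set \<Rightarrow> 'a set) \<Rightarrow> bool) \<Rightarrow> 'a topology \<Rightarrow> sequent \<Rightarrow> bool" where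
  "valid_in_class C Z s \<longleftrightarrow> (\<forall>nab V. C Z nab \<longrightarrow> valuation Z V \<longrightarrow> models Z nab V s)"

end

theory Submission
  imports Defs
begin

definition pre :: "'a topology \<Rightarrow> ('a \<Rightarrow> 'b) \<Rightarrow> 'b set \<Rightarrow> 'a set" where
  "pre X f S = {x \<in> topspace X. f x \<in> S}"

definition upc :: "'b topology \<Rightarrow> 'b set \<Rightarrow> 'b set" where
  "upc Y S = topspace Y \<inter> \<Inter>{W. openin Y W \<and> S \<subseteq> W}"

lemma upc_open: "alexandroff Y \<Longrightarrow> openin Y (upc Y S)"
  unfolding alexandroff_def upc_def by auto

lemma upc_sub: "S \<subseteq> topspace Y \<Longrightarrow> S \<subseteq> upc Y S"
  unfolding upc_def by auto

lemma upc_least: "openin Y W \<Longrightarrow> S \<subseteq> W \<Longrightarrow> upc Y S \<subseteq> W"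
  unfolding upc_def by auto

lemma upc_mono: "S \<subseteq> T \<Longrightarrow> upc Y S \<subseteq> upc Y T"
  unfolding upc_def by auto

lemma upc_of_open: "openin Y W \<Longrightarrow> upc Y W = W"
  by (rule subset_antisym[OF upc_least[OF _ order_refl] upc_sub[OF openin_subset]])

lemma upc_Union:
  assumes "alexandroff Y" "\<forall>S\<in>F. S \<subseteq> topspace Y"
  shows "upc Y (\<Union>F) = \<Union>(upc Y ` F)"
proof
  have "openin Y (\<Union>(upc Y ` F))" using upc_open[OF assms(1)] by auto
  moreover have "\<Union>F \<subseteq> \<Union>(upc Y ` F)" using assms(2) unfolding upc_def by blast
  ultimately show "upc Y (\<Union>F) \<subseteq> \<Union>(upc Y ` F)" by (rule upc_least)
next
  show "\<Union>(upc Y ` F) \<subseteq> upc Y (\<Union>F)" by (rule UN_least, rule upc_mono, blast)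
qed

lemma pre_open: "continuous_map X Y f \<Longrightarrow> openin Y S \<Longrightarrow> openin X (pre X f S)"
  unfolding pre_def continuous_map_def by auto

lemma img_pre: "f ` topspace X = topspace Y \<Longrightarrow> S \<subseteq> topspace Y \<Longrightarrow> f ` pre X f S = S"
  unfolding pre_def by auto

lemma pre_sub_iff:
  assumes a: "f ` topspace X = topspace Y" "S \<subseteq> topspace Y"
  shows "pre X f S \<subseteq> pre X f T \<longleftrightarrow> S \<subseteq> T"
proof
  assume b: "pre X f S \<subseteq> pre X f T"
  show "S \<subseteq> T"
  proof
    fix y assume "y \<in> S"
    then obtain x where "x \<in> topspace X" "f x = y" using a by (metis imageE subsetD)
    thus "y \<in> T" using b \<open>y \<in> S\<close> unfolding pre_def by blast
  qed
next
  assume "S \<subseteq> T" thus "pre X f S \<subseteq> pre X f T" unfolding pre_def by blast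
qed

lemma box_open: "openin Z (box_op Z nab U)"
  unfolding box_op_def by (rule openin_Union) blast

lemma eval_open:
  assumes jp: "join_preserving Z nab" and v: "valuation Z V"
  shows "openin Z (eval Z nab V A)"
proof (induction A)
  case (FVar p) thus ?case using v unfolding valuation_def by simp
next
  case (FNabla A) thus ?case using jp unfolding join_preserving_def by simp
next
  case (FImp A B) show ?case by (simp add: st_imp_def box_open)
qed (simp_all add: openin_Int openin_Un)

lemma jp_open: "join_preserving Z nab \<Longrightarrow> openin Z W \<Longrightarrow> openin Z (nab W)"
  unfolding join_preserving_def by simp

lemma jp_Union: "join_preserving Z nab \<Longrightarrow> (\<And>W. W \<in> F \<Longrightarrow> openin Z W) \<Longrightarrow> nab (\<Union>F) = \<Union>(nab ` F)"
  unfolding join_preserving_def by simp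

lemma nab_box:
  assumes "join_preserving Z nab"
  shows "nab (box_op Z nab U) \<subseteq> U"
proof -
  have "nab (box_op Z nab U) = \<Union>(nab ` {W. openin Z W \<and> nab W \<subseteq> U})"
    unfolding box_op_def by (rule jp_Union[OF assms]) simp
  thus ?thesis by auto
qed

lemma heyting_prop: "heyting_imp Z A B \<inter> A \<subseteq> B"
  unfolding heyting_imp_def by auto

lemma construction:
  fixes X :: "'a topology" and Y :: "'b topology" and f :: "'a \<Rightarrow> 'b"
  assumes alex: "alexandroff Y"
    and cont: "continuous_map X Y f"
    and surj: "f ` topspace X = topspace Y"
    and jpY: "join_preserving Y nabY" and vY: "valuation Y V"
  defines "nabX \<equiv> \<lambda>W. pre X f (nabY (upc Y (f ` W)))"
  defines "U \<equiv> \<lambda>p. pre X f (V p)"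
  shows "join_preserving X nabX \<and> valuation X U \<and>
               (\<forall>s. models X nabX U s \<longleftrightarrow> models Y nabY V s) \<and>
               (in_iST_F Y nabY \<longrightarrow> in_iST_F X nabX) \<and>
               (in_iST_wF Y nabY \<longrightarrow> in_iST_wF X nabX)"
proof -
  have fW: "f ` W \<subseteq> topspace Y" if "openin X W" for W
    using openin_subset[OF that] continuous_map_image_subset_topspace[OF cont] by blast
  have jpX: "join_preserving X nabX"
    unfolding join_preserving_def
  proof (intro conjI allI impI)
    fix W assume "openin X W"
    show "openin X (nabX W)" unfolding nabX_def
      using jp_open[OF jpY upc_open[OF alex]] pre_open[OF cont] by blast
  next
    fix F assume F: "\<forall>W\<in>F. openin X W"
    have "upc Y (f ` \<Union>F) = upc Y (\<Union>((`) f ` F))" by (simp add: image_Union)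
    also have "\<dots> = \<Union>(upc Y ` ((`) f ` F))"
      by (rule upc_Union[OF alex]) (use fW F in blast)
    finally have e: "upc Y (f ` \<Union>F) = \<Union>((\<lambda>W. upc Y (f ` W)) ` F)" by (simp add: image_image)
    have "nabY (upc Y (f ` \<Union>F)) = \<Union>(nabY ` ((\<lambda>W. upc Y (f ` W)) ` F))"
      unfolding e by (rule jp_Union[OF jpY]) (use upc_open[OF alex] in blast)
    thus "nabX (\<Union>F) = \<Union>(nabX ` F)" unfolding nabX_def pre_def by auto
  qed
  have vX: "valuation X U" using vY[unfolded valuation_def] pre_open[OF cont] unfolding valuation_def U_def by blast
  have nabX_pre: "nabX (pre X f W) = pre X f (nabY W)" if "openin Y W" for W
    unfolding nabX_def using img_pre[OF surj] openin_subset[OF that] upc_of_open[OF that] by simp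
  have ev: "eval X nabX U A = pre X f (eval Y nabY V A)" for A
  proof (induction A)
    case (FImp A B)
    define A' where "A' = eval Y nabY V A"
    define B' where "B' = eval Y nabY V B"
    have oA: "openin Y A'" "openin Y B'" using eval_open[OF jpY vY] A'_def B'_def by auto
    have "st_imp X nabX (pre X f A') (pre X f B') = pre X f (st_imp Y nabY A' B')"
    proof
      show "st_imp X nabX (pre X f A') (pre X f B') \<subseteq> pre X f (st_imp Y nabY A' B')"
        unfolding st_imp_def box_op_def[of X]
      proof (rule Union_least)
        fix W assume "W \<in> {W. openin X W \<and> nabX W \<subseteq> heyting_imp X (pre X f A') (pre X f B')}"
        hence oW: "openin X W" and sW: "nabX W \<subseteq> heyting_imp X (pre X f A') (pre X f B')" by auto
        define G where "G = nabY (upc Y (f ` W))"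
        have oG: "openin Y G" unfolding G_def using jp_open[OF jpY upc_open[OF alex]] by blast
        have "pre X f G \<inter> pre X f A' \<subseteq> pre X f B'"
          using sW heyting_prop[of X "pre X f A'" "pre X f B'"] unfolding nabX_def G_def by blast
        hence "pre X f (G \<inter> A') \<subseteq> pre X f B'" unfolding pre_def by blast
        hence "G \<inter> A' \<subseteq> B'" using pre_sub_iff[OF surj] openin_subset[OF oG] by blast
        hence "G \<subseteq> heyting_imp Y A' B'" unfolding heyting_imp_def using oG by blast
        hence "upc Y (f ` W) \<subseteq> box_op Y nabY (heyting_imp Y A' B')"
          unfolding box_op_def G_def using upc_open[OF alex] by blast
        hence "f ` W \<subseteq> box_op Y nabY (heyting_imp Y A' B')"
          using upc_sub[OF fW[OF oW]] by blast
        thus "W \<subseteq> pre X f (box_op Y nabY (heyting_imp Y A' B'))"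
          unfolding pre_def using openin_subset[OF oW] by blast
      qed
    next
      define Bx where "Bx = box_op Y nabY (heyting_imp Y A' B')"
      have oB: "openin Y Bx" unfolding Bx_def box_op_def by auto
      have "nabX (pre X f Bx) = pre X f (nabY Bx)" using nabX_pre[OF oB] .
      also have "\<dots> \<subseteq> pre X f (heyting_imp Y A' B')"
        using nab_box[OF jpY] unfolding Bx_def pre_def by blast
      also have "\<dots> \<subseteq> heyting_imp X (pre X f A') (pre X f B')"
      proof -
        have "openin Y (heyting_imp Y A' B')" unfolding heyting_imp_def by auto
        hence "openin X (pre X f (heyting_imp Y A' B'))" using pre_open[OF cont] by blast
        moreover have "pre X f (heyting_imp Y A' B') \<inter> pre X f A' \<subseteq> pre X f B'"
          using heyting_prop[of Y A' B'] unfolding pre_def by blast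
        ultimately show ?thesis unfolding heyting_imp_def by blast
      qed
      finally have "nabX (pre X f Bx) \<subseteq> heyting_imp X (pre X f A') (pre X f B')" .
      moreover have "openin X (pre X f Bx)" using pre_open[OF cont oB] .
      ultimately show "pre X f (st_imp Y nabY A' B') \<subseteq> st_imp X nabX (pre X f A') (pre X f B')"
        unfolding st_imp_def box_op_def[of X] Bx_def by blast
    qed
    thus ?case using FImp A'_def B'_def by simp
  next
    case (FNabla A)
    thus ?case using nabX_pre eval_open[OF jpY vY] by simp
  next
    case (FVar p) show ?case by (simp add: U_def)
  next
    case FOne show ?case using continuous_map_image_subset_topspace[OF cont] unfolding pre_def by auto
  next
    case FTop show ?case using continuous_map_image_subset_topspace[OF cont] unfolding pre_def by auto
  next
    case FBot show ?case unfolding pre_def by simp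
  next
    case (FAnd A B) thus ?case unfolding pre_def by auto
  next
    case (FOr A B) thus ?case unfolding pre_def by auto
  next
    case (FTens A B) thus ?case unfolding pre_def by auto
  qed
  have fold: "foldr (\<lambda>g acc. eval X nabX U g \<inter> acc) G (topspace X)
     = pre X f (foldr (\<lambda>g acc. eval Y nabY V g \<inter> acc) G (topspace Y))" for G
    using continuous_map_image_subset_topspace[OF cont] by (induction G) (auto simp: ev pre_def)
  have foldsub: "foldr (\<lambda>g acc. eval Y nabY V g \<inter> acc) G (topspace Y) \<subseteq> topspace Y" for G
    by (induction G) auto
  have mod: "models X nabX U s \<longleftrightarrow> models Y nabY V s" for s
    unfolding models_def by (subst fold, subst ev, rule pre_sub_iff[OF surj foldsub])
  have F: "in_iST_F X nabX" if "in_iST_F Y nabY"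
    unfolding in_iST_F_def
  proof (intro conjI jpX allI impI)
    fix W assume oW: "openin X W"
    have "f ` W \<subseteq> nabY (upc Y (f ` W))"
      using that upc_open[OF alex] upc_sub[OF fW[OF oW]] unfolding in_iST_F_def by blast
    thus "W \<subseteq> nabX W" unfolding nabX_def pre_def using openin_subset[OF oW] by blast
  qed
  have wF: "in_iST_wF X nabX" if "in_iST_wF Y nabY"
    unfolding in_iST_wF_def
  proof (intro conjI jpX allI impI)
    fix W assume oW: "openin X W" and e: "nabX W = {}"
    have oG: "openin Y (nabY (upc Y (f ` W)))"
      using jp_open[OF jpY upc_open[OF alex]] by blast
    have "nabY (upc Y (f ` W)) = {}"
      using e img_pre[OF surj openin_subset[OF oG]] unfolding nabX_def by auto
    hence "upc Y (f ` W) = {}" using that upc_open[OF alex] unfolding in_iST_wF_def by blast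
    thus "W = {}" using upc_sub[OF fW[OF oW]] by blast
  qed
  show ?thesis using jpX vX mod F wF by blast
qed

theorem theorem8p10:
  fixes X :: "'a topology" and Y :: "'b topology" and f :: "'a \<Rightarrow> 'b"
  assumes "alexandroff Y"
    and "continuous_map X Y f"
    and "f ` topspace X = topspace Y"
  shows "(\<forall>nabY V. join_preserving Y nabY \<longrightarrow> valuation Y V \<longrightarrow>
            (\<exists>nabX U. join_preserving X nabX \<and> valuation X U \<and>
               (\<forall>s. models X nabX U s \<longleftrightarrow> models Y nabY V s) \<and>
               (in_iST_F Y nabY \<longrightarrow> in_iST_F X nabX) \<and>
               (in_iST_wF Y nabY \<longrightarrow> in_iST_wF X nabX)))
       \<and> (\<forall>s. valid_in_class in_iST_F X s \<longrightarrow> valid_in_class in_iST_F Y s)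
       \<and> (\<forall>s. valid_in_class in_iST_wF X s \<longrightarrow> valid_in_class in_iST_wF Y s)"
proof -
  have main: "\<forall>nabY V. join_preserving Y nabY \<longrightarrow> valuation Y V \<longrightarrow>
            (\<exists>nabX U. join_preserving X nabX \<and> valuation X U \<and>
               (\<forall>s. models X nabX U s \<longleftrightarrow> models Y nabY V s) \<and>
               (in_iST_F Y nabY \<longrightarrow> in_iST_F X nabX) \<and>
               (in_iST_wF Y nabY \<longrightarrow> in_iST_wF X nabX))"
    using construction[OF assms] by blast
  have a: "valid_in_class in_iST_F Y s" if "valid_in_class in_iST_F X s" for s
    unfolding valid_in_class_def
  proof (intro allI impI)
    fix nab V assume c: "in_iST_F Y nab" and v: "valuation Y V"
    have jp: "join_preserving Y nab" using c unfolding in_iST_F_def by simp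
    obtain nX U where "valuation X U" "\<forall>s. models X nX U s \<longleftrightarrow> models Y nab V s" "in_iST_F Y nab \<longrightarrow> in_iST_F X nX"
      using main jp v by blast
    hence "valuation X U" "models X nX U s \<longleftrightarrow> models Y nab V s" "in_iST_F X nX" using c by blast+
    thus "models Y nab V s" using that unfolding valid_in_class_def by blast
  qed
  have b: "valid_in_class in_iST_wF Y s" if "valid_in_class in_iST_wF X s" for s
    unfolding valid_in_class_def
  proof (intro allI impI)
    fix nab V assume c: "in_iST_wF Y nab" and v: "valuation Y V"
    have jp: "join_preserving Y nab" using c unfolding in_iST_wF_def by simp
    obtain nX U where "valuation X U" "\<forall>s. models X nX U s \<longleftrightarrow> models Y nab V s" "in_iST_wF Y nab \<longrightarrow> in_iST_wF X nX"
      using main jp v by blast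
    hence "valuation X U" "models X nX U s \<longleftrightarrow> models Y nab V s" "in_iST_wF X nX" using c by blast+
    thus "models Y nab V s" using that unfolding valid_in_class_def by blast
  qed
  show ?thesis using main a b by blast
qed

end
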